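(* Let $g\in\mathbb{L}$ with $g>\mathbb{R}$. Then the family $(\log_n(g))_{n\in\mathbb{N}}$ is multipliable, i.e. the family $(\log\log_n(g))_{n\in\mathbb{N}}=(\log_{n+1}(g))_{n\in\mathbb{N}}$ is summable.
   Context: Fix distinct symbols $\ell_\alpha$ for all ordinals. Exponent sequences $r=(r_\beta)$: reals over all ordinals, zero beyond some ordinal; monomials $\ell^r=\prod\ell_\beta^{r_\beta}$ form the ordered group $\mathfrak{L}$ ($\ell^r\ell^s=\ell^{r+s}$; $\ell^r\prec\ell^s$ iff $r\ne s$ and $r_\beta<s_\beta$ at the least differing $\beta$); $\ell_\alpha$ has exponent $1$ at $\alpha$, else $0$. $\mathbb{L}_{<\alpha}=\mathbb{R}[[\mathfrak{L}_{<\alpha}]]$ ($\mathfrak{L}_{<\alpha}$: monomials with $r_\beta=0$ for $\beta\ge\alpha$) is the Hahn field of series with well-based support (no infinite strictly increasing sequence), ordered by sign of leading coefficient; $\mathbb{L}=\bigcup\mathbb{L}_{<\alpha}$; $\mathfrak{d}(f)$ = largest monomial of $\operatorname{supp}f$, $f\prec g$ iff $\mathfrak{d}(f)\prec\mathfrak{d}(g)$. A family $(f_i)_{i\in I}$ ($I$ a set) is summable if all $f_i$ lie in one $\mathbb{L}_{<\alpha}$, $\bigcup\operatorname{supp}f_i$ is well-based, and each monomial lies in $\operatorname{supp}f_i$ for only finitely many $i$. Logarithm: $\log\ell^r=\sum r_\beta\ell_{\beta+1}$, and for $f>0$, $f=c\,\mathfrak{d}(f)(1+\epsilon)$ with $c\in\mathbb{R}^{>0}$,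 $\epsilon\prec1$: $\log f=\log\mathfrak{d}(f)+\log c+\sum_{n\ge1}\frac{(-1)^{n-1}}{n}\epsilon^n$. A family $(f_i)$ in $\mathbb{L}^{>0}$ is multipliable if $(\log f_i)$ is summable. $\log_0(g)=g$, $\log_{n+1}(g)=\log(\log_n(g))$ for $g>\mathbb{R}$ (these remain $>\mathbb{R}$). *)

theory Defs
  imports Complex_Main "HOL-Library.Countable_Set"
begin

text \<open>Ordinals are modelled by a wellorder type 'o.
  Exponent sequences / monomials: functions 'o => real (bounded support is
  enforced through the fields L_{<alpha}).\<close>

type_synonym 'o mon = "'o \<Rightarrow> real"
type_synonym 'o ser = "'o mon \<Rightarrow> real"

definition mon_less :: "'o::wellorder mon \<Rightarrow> 'o mon \<Rightarrow> bool" where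
  "mon_less r s \<longleftrightarrow> r \<noteq> s \<and>
     r (LEAST \<beta>. r \<beta> \<noteq> s \<beta>) < s (LEAST \<beta>. r \<beta> \<noteq> s \<beta>)"

definition mon_mult :: "'o mon \<Rightarrow> 'o mon \<Rightarrow> 'o mon" where
  "mon_mult r s = (\<lambda>\<beta>. r \<beta> + s \<beta>)"

definition mon_one :: "'o mon" where
  "mon_one = (\<lambda>\<beta>. 0)"

definition ordsucc :: "'o::wellorder \<Rightarrow> 'o" where
  "ordsucc \<beta> = (LEAST \<gamma>. \<beta> < \<gamma>)"

definition ell :: "'o \<Rightarrow> 'o mon" where
  "ell \<gamma> = (\<lambda>\<beta>. if \<beta> = \<gamma> then 1 else 0)"

definition supp :: "'o ser \<Rightarrow> 'o mon set" where
  "supp f = {m. f m \<noteq> 0}"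

definition well_based :: "'o::wellorder mon set \<Rightarrow> bool" where
  "well_based S \<longleftrightarrow> \<not> (\<exists>h::nat \<Rightarrow> 'o mon. \<forall>n. h n \<in> S \<and> mon_less (h n) (h (Suc n)))"

definition mons_below :: "'o::wellorder \<Rightarrow> 'o mon set" where
  "mons_below \<alpha> = {r. \<forall>\<beta>. \<alpha> \<le> \<beta> \<longrightarrow> r \<beta> = 0}"

definition Lbelow :: "'o::wellorder \<Rightarrow> 'o ser set" where
  "Lbelow \<alpha> = {f. supp f \<subseteq> mons_below \<alpha> \<and> well_based (supp f)}"

definition Lser :: "'o::wellorder ser set" where
  "Lser = (\<Union>\<alpha>. Lbelow \<alpha>)"

definition ser_const :: "real \<Rightarrow> 'o ser" where
  "ser_const c = (\<lambda>m. if m = mon_one then c else 0)"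

definition ser_monom :: "'o mon \<Rightarrow> 'o ser" where
  "ser_monom n = (\<lambda>m. if m = n then 1 else 0)"

definition ser_scale :: "real \<Rightarrow> 'o ser \<Rightarrow> 'o ser" where
  "ser_scale c f = (\<lambda>m. c * f m)"

definition ser_add :: "'o ser \<Rightarrow> 'o ser \<Rightarrow> 'o ser" where
  "ser_add f g = (\<lambda>m. f m + g m)"

definition ser_mult :: "'o ser \<Rightarrow> 'o ser \<Rightarrow> 'o ser" where
  "ser_mult f g = (\<lambda>m. \<Sum>p\<in>{p. fst p \<in> supp f \<and> snd p \<in> supp g \<and> mon_mult (fst p) (snd p) = m}.
                        f (fst p) * g (snd p))"

primrec ser_pow :: "'o ser \<Rightarrow> nat \<Rightarrow> 'o ser" where
  "ser_pow f 0 = ser_const 1"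
| "ser_pow f (Suc n) = ser_mult f (ser_pow f n)"

definition dom_mon :: "'o::wellorder ser \<Rightarrow> 'o mon" where
  "dom_mon f = (THE m. m \<in> supp f \<and> (\<forall>m'\<in>supp f. m' = m \<or> mon_less m' m))"

definition ser_pos :: "'o::wellorder ser \<Rightarrow> bool" where
  "ser_pos f \<longleftrightarrow> supp f \<noteq> {} \<and> f (dom_mon f) > 0"

definition ser_less :: "'o::wellorder ser \<Rightarrow> 'o ser \<Rightarrow> bool" where
  "ser_less f g \<longleftrightarrow> ser_pos (\<lambda>m. g m - f m)"

definition pos_infinite :: "'o::wellorder ser \<Rightarrow> bool" where
  "pos_infinite g \<longleftrightarrow> (\<forall>c::real. ser_less (ser_const c) g)"

definition summable_fam :: "('i \<Rightarrow> 'o::wellorder ser) \<Rightarrow> 'i set \<Rightarrow> bool" where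
  "summable_fam F I \<longleftrightarrow>
     (\<exists>\<alpha>. \<forall>i\<in>I. F i \<in> Lbelow \<alpha>) \<and>
     well_based (\<Union>i\<in>I. supp (F i)) \<and>
     (\<forall>m. finite {i\<in>I. m \<in> supp (F i)})"

definition sum_fam :: "('i \<Rightarrow> 'o ser) \<Rightarrow> 'i set \<Rightarrow> 'o ser" where
  "sum_fam F I = (\<lambda>m. \<Sum>i\<in>{i\<in>I. m \<in> supp (F i)}. F i m)"

definition log_mon :: "'o::wellorder mon \<Rightarrow> 'o ser" where
  "log_mon r = sum_fam (\<lambda>\<beta>. ser_scale (r \<beta>) (ser_monom (ell (ordsucc \<beta>)))) UNIV"

text \<open>for f > 0, f = c d(f) (1 + eps)\<close>
definition Llog :: "'o::wellorder ser \<Rightarrow> 'o ser" where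
  "Llog f = (let d = dom_mon f; c = f d;
                 eps = (\<lambda>m. f (mon_mult m d) / c - (if m = mon_one then 1 else 0))
             in ser_add (ser_add (log_mon d) (ser_const (ln c)))
                  (sum_fam (\<lambda>n. ser_scale ((-1) ^ (n - 1) / real n) (ser_pow eps n)) {1..}))"

definition multipliable :: "('i \<Rightarrow> 'o::wellorder ser) \<Rightarrow> 'i set \<Rightarrow> bool" where
  "multipliable F I \<longleftrightarrow> (\<forall>i\<in>I. F i \<in> Lser \<and> ser_pos (F i)) \<and> summable_fam (\<lambda>i. Llog (F i)) I"

definition logn :: "nat \<Rightarrow> 'o::wellorder ser \<Rightarrow> 'o ser" where
  "logn n = Llog ^^ n"

end

theory Submission imports Defs begin

section \<open>Monomial order\<close>

lemma mon_less_iff: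
  "mon_less (r::'o::wellorder mon) s \<longleftrightarrow> (\<exists>\<beta>. r \<beta> < s \<beta> \<and> (\<forall>\<gamma><\<beta>. r \<gamma> = s \<gamma>))"
proof
  assume "mon_less r s"
  then have ne: "r \<noteq> s" and lt: "r (LEAST \<beta>. r \<beta> \<noteq> s \<beta>) < s (LEAST \<beta>. r \<beta> \<noteq> s \<beta>)"
    by (auto simp: mon_less_def)
  have "\<forall>\<gamma><(LEAST \<beta>. r \<beta> \<noteq> s \<beta>). r \<gamma> = s \<gamma>" using not_less_Least by blast
  with lt show "\<exists>\<beta>. r \<beta> < s \<beta> \<and> (\<forall>\<gamma><\<beta>. r \<gamma> = s \<gamma>)" by blast
next
  assume "\<exists>\<beta>. r \<beta> < s \<beta> \<and> (\<forall>\<gamma><\<beta>. r \<gamma> = s \<gamma>)"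
  then obtain \<beta> where b: "r \<beta> < s \<beta>" "\<forall>\<gamma><\<beta>. r \<gamma> = s \<gamma>" by blast
  have L: "(LEAST \<beta>. r \<beta> \<noteq> s \<beta>) = \<beta>"
    by (rule Least_equality) (use b in \<open>auto simp: not_less[symmetric]\<close>)
  show "mon_less r s" unfolding mon_less_def L using b by auto
qed

lemma mon_less_irrefl[simp]: "\<not> mon_less (r::'o::wellorder mon) r"
  by (auto simp: mon_less_def)

lemma mon_less_trans:
  assumes "mon_less (r::'o::wellorder mon) s" "mon_less s t" shows "mon_less r t"
proof -
  obtain a where a: "r a < s a" "\<forall>\<gamma><a. r \<gamma> = s \<gamma>" using assms(1) by (auto simp: mon_less_iff)
  obtain b where b: "s b < t b" "\<forall>\<gamma><b. s \<gamma> = t \<gamma>" using assms(2) by (auto simp: mon_less_iff)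
  show ?thesis unfolding mon_less_iff
  proof (cases a b rule: linorder_cases)
    case less then show "\<exists>\<beta>. r \<beta> < t \<beta> \<and> (\<forall>\<gamma><\<beta>. r \<gamma> = t \<gamma>)"
      using a b by (intro exI[of _ a]) auto
  next
    case equal then show "\<exists>\<beta>. r \<beta> < t \<beta> \<and> (\<forall>\<gamma><\<beta>. r \<gamma> = t \<gamma>)"
      using a b by (intro exI[of _ a]) auto
  next
    case greater then show "\<exists>\<beta>. r \<beta> < t \<beta> \<and> (\<forall>\<gamma><\<beta>. r \<gamma> = t \<gamma>)"
      using a b by (intro exI[of _ b]) auto
  qed
qed

lemma mon_less_asym: "mon_less (r::'o::wellorder mon) s \<Longrightarrow> \<not> mon_less s r"
proof
  assume "mon_less r s" "mon_less s r"
  then have "mon_less r r" by (rule mon_less_trans)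
  then show False by simp
qed

lemma mon_less_total: "(r::'o::wellorder mon) \<noteq> s \<Longrightarrow> mon_less r s \<or> mon_less s r"
proof -
  assume "r \<noteq> s"
  then have ex: "\<exists>\<beta>. r \<beta> \<noteq> s \<beta>" by auto
  define \<mu> where "\<mu> = (LEAST \<beta>. r \<beta> \<noteq> s \<beta>)"
  have d: "r \<mu> \<noteq> s \<mu>" unfolding \<mu>_def using LeastI_ex[OF ex] .
  have e: "\<forall>\<gamma><\<mu>. r \<gamma> = s \<gamma>" unfolding \<mu>_def using not_less_Least by blast
  show ?thesis
  proof (cases "r \<mu> < s \<mu>")
    case True then show ?thesis using e by (auto simp: mon_less_iff)
  next
    case False then have "s \<mu> < r \<mu>" using d by auto
    then show ?thesis using e by (auto simp: mon_less_iff)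
  qed
qed

abbreviation mon_le :: "'o::wellorder mon \<Rightarrow> 'o mon \<Rightarrow> bool" where
  "mon_le r s \<equiv> r = s \<or> mon_less r s"

lemma mon_le_trans: "mon_le r s \<Longrightarrow> mon_le s t \<Longrightarrow> mon_le r t"
proof -
  assume a: "mon_le r s" and b: "mon_le s t"
  show ?thesis
  proof (cases "r = s")
    case True then show ?thesis using b by simp
  next
    case False then have "mon_less r s" using a by simp
    then show ?thesis using b mon_less_trans[of r s t] by auto
  qed
qed

lemma mon_not_less: "\<not> mon_less r s \<longleftrightarrow> mon_le s r"
proof
  assume "\<not> mon_less r s" then show "mon_le s r" using mon_less_total[of r s] by auto
next
  assume "mon_le s r" then show "\<not> mon_less r s" using mon_less_asym[of s r] by auto
qed

lemma mon_mult_comm: "mon_mult r s = mon_mult s r"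
  by (auto simp: mon_mult_def)
lemma mon_mult_assoc: "mon_mult (mon_mult r s) t = mon_mult r (mon_mult s t)"
  by (auto simp: mon_mult_def)
lemma mon_mult_one[simp]: "mon_mult r mon_one = r" "mon_mult mon_one r = r"
  by (auto simp: mon_mult_def mon_one_def)

definition minv :: "'o mon \<Rightarrow> 'o mon" where "minv r = (\<lambda>\<beta>. - r \<beta>)"

lemma mon_mult_minv[simp]: "mon_mult r (minv r) = mon_one" "mon_mult (minv r) r = mon_one"
  by (auto simp: mon_mult_def mon_one_def minv_def)

lemma mon_mult_cancel: "mon_mult r t = mon_mult s t \<longleftrightarrow> r = s"
  by (auto simp: mon_mult_def fun_eq_iff)

lemma mon_less_mult_right[simp]: "mon_less (mon_mult r t) (mon_mult s t) \<longleftrightarrow> mon_less r s"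
  by (simp add: mon_less_iff mon_mult_def)

lemma mon_less_mult_left[simp]: "mon_less (mon_mult t r) (mon_mult t s) \<longleftrightarrow> mon_less r s"
  by (simp add: mon_less_iff mon_mult_def)

lemma mon_le_mult: "mon_le a b \<Longrightarrow> mon_le c d \<Longrightarrow> mon_le (mon_mult a c) (mon_mult b d)"
proof -
  assume ab: "mon_le a b" and cd: "mon_le c d"
  have 1: "mon_le (mon_mult a c) (mon_mult b c)" using ab by auto
  have 2: "mon_le (mon_mult b c) (mon_mult b d)" using cd by auto
  show ?thesis using mon_le_trans[OF 1 2] .
qed

lemma mon_less_mult_le: "mon_less a b \<Longrightarrow> mon_le c d \<Longrightarrow> mon_less (mon_mult a c) (mon_mult b d)"
proof -
  assume ab: "mon_less a b" and cd: "mon_le c d"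
  have 1: "mon_less (mon_mult a c) (mon_mult b c)" using ab by auto
  have 2: "mon_le (mon_mult b c) (mon_mult b d)" using cd by auto
  show ?thesis
  proof (cases "c = d")
    case True then show ?thesis using 1 by simp
  next
    case False then have "mon_less (mon_mult b c) (mon_mult b d)" using cd by simp
    then show ?thesis using mon_less_trans[OF 1] by blast
  qed
qed

lemma mon_mult_cancel_less:
  "mon_less (mon_mult a c) (mon_mult b d) \<Longrightarrow> mon_le b a \<Longrightarrow> mon_less c d"
proof (rule ccontr)
  assume 1: "mon_less (mon_mult a c) (mon_mult b d)" and 2: "mon_le b a" and "\<not> mon_less c d"
  then have "mon_le d c" by (simp add: mon_not_less)
  then have "mon_le (mon_mult b d) (mon_mult a c)" using mon_le_mult[OF 2] by blast
  then show False using 1 mon_less_asym[OF 1] by auto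
qed

lemma mon_neg_mult: "mon_less s mon_one \<Longrightarrow> mon_less (mon_mult s y) y"
  using mon_less_mult_right[of s y mon_one] by simp

lemma mon_neg_mult_le: "mon_less s mon_one \<Longrightarrow> mon_le y mon_one \<Longrightarrow> mon_less (mon_mult s y) mon_one"
  using mon_less_mult_le[of s mon_one y mon_one] by simp

lemma minv_less: "mon_less mon_one r \<Longrightarrow> mon_less (minv r) mon_one"
  by (metis mon_less_mult_right mon_mult_minv(1) mon_mult_one(2))

lemma ell_pos: "mon_less mon_one (ell (\<gamma>::'o::wellorder))"
  by (auto simp: mon_less_iff mon_one_def ell_def intro!: exI[of _ \<gamma>])

lemma ell_less: "(\<gamma>::'o::wellorder) < \<delta> \<Longrightarrow> mon_less (ell \<delta>) (ell \<gamma>)"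
  by (auto simp: mon_less_iff ell_def intro!: exI[of _ \<gamma>])

lemma ell_less_D: "mon_less (ell (a::'o::wellorder)) (ell b) \<Longrightarrow> b < a"
proof (rule ccontr)
  assume h: "mon_less (ell a) (ell b)" and "\<not> b < a"
  then have "a = b \<or> a < b" by auto
  then show False
  proof
    assume "a = b" then show False using h by simp
  next
    assume "a < b" then show False using ell_less[of a b] mon_less_asym[OF h] by simp
  qed
qed

lemma ell_inj: "ell a = ell b \<longleftrightarrow> a = b"
proof
  assume "ell a = ell b"
  then have "ell a a = ell b a" by simp
  then show "a = b" by (auto simp: ell_def split: if_splits)
qed simp

lemma ell_ne_one: "ell (a::'o::wellorder) \<noteq> mon_one"
  using ell_pos[of a] by auto

section \<open>Well-basedness\<close>

lemma wb_iff_wf: "well_based S \<longleftrightarrow> wf {(x,y). x \<in> S \<and> y \<in> S \<and> mon_less y x}"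
  unfolding well_based_def wf_iff_no_infinite_down_chain by auto

lemma wb_max:
  assumes "well_based S" "T \<subseteq> S" "T \<noteq> {}"
  shows "\<exists>m\<in>T. \<forall>x\<in>T. x = m \<or> mon_less x m"
proof -
  have wf: "wf {(x,y). x \<in> S \<and> y \<in> S \<and> mon_less y x}" using assms(1) wb_iff_wf by blast
  obtain t where "t \<in> T" using assms(3) by auto
  from wfE_min[OF wf this] obtain z where z: "z \<in> T" "\<And>y. (y, z) \<in> {(x,y). x \<in> S \<and> y \<in> S \<and> mon_less y x} \<Longrightarrow> y \<notin> T"
    by blast
  show ?thesis
  proof (intro bexI[OF _ z(1)] ballI)
    fix x assume "x \<in> T"
    then have "\<not> mon_less z x" using z assms(2) by blast
    then show "x = z \<or> mon_less x z" using mon_not_less by blast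
  qed
qed

lemma wb_subset: "well_based S \<Longrightarrow> T \<subseteq> S \<Longrightarrow> well_based T"
  unfolding well_based_def by blast

lemma wb_empty[simp]: "well_based {}"
  unfolding well_based_def by blast

lemma wb_Un:
  assumes "well_based S" "well_based T" shows "well_based (S \<union> T)"
proof (rule ccontr)
  assume "\<not> well_based (S \<union> T)"
  then obtain h where h: "\<forall>n. h n \<in> S \<union> T \<and> mon_less (h n) (h (Suc n))"
    unfolding well_based_def by blast
  have mono: "i < j \<Longrightarrow> mon_less (h i) (h j)" for i j
  proof (induction j)
    case 0 then show ?case by simp
  next
    case (Suc j)
    show ?case
    proof (cases "i = j")
      case True then show ?thesis using h by simp
    next
      case False then have "mon_less (h i) (h j)" using Suc by simp
      then show ?thesis using h mon_less_trans[of "h i" "h j" "h (Suc j)"] by blast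
    qed
  qed
  have "infinite {n. h n \<in> S} \<or> infinite {n. h n \<in> T}"
  proof (rule ccontr)
    assume "\<not> ?thesis"
    then have "finite ({n. h n \<in> S} \<union> {n. h n \<in> T})" by auto
    moreover have "{n. h n \<in> S} \<union> {n. h n \<in> T} = UNIV" using h by auto
    ultimately show False by simp
  qed
  moreover have False if inf: "infinite {n. h n \<in> A}" and wA: "well_based A" for A
  proof -
    define e where "e = enumerate {n. h n \<in> A}"
    have "\<forall>n. h (e n) \<in> A \<and> mon_less (h (e n)) (h (e (Suc n)))"
      using enumerate_in_set[OF inf] enumerate_mono[OF _ inf] mono unfolding e_def by auto
    then have "\<exists>g. \<forall>n. g n \<in> A \<and> mon_less (g n) (g (Suc n))" by (intro exI[of _ "\<lambda>n. h (e n)"])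
    then show False using wA unfolding well_based_def by blast
  qed
  ultimately show False using assms by blast
qed

lemma wb_single: "well_based {x::'o::wellorder mon}"
  unfolding well_based_def
proof (clarify)
  fix h assume H: "\<forall>n. h n \<in> {x} \<and> mon_less (h n) (h (Suc n))"
  have 1: "h 0 = x" using spec[OF H, of 0] by simp
  have 2: "h (Suc 0) = x" using spec[OF H, of "Suc 0"] by simp
  have L: "mon_less (h 0) (h (Suc 0))" using spec[OF H, of 0] by (rule conjunct2)
  show False using L 1 2 mon_less_irrefl by metis
qed

lemma wb_insert: "well_based S \<Longrightarrow> well_based (insert x S)"
  using wb_Un[OF wb_single[of x], of S] insert_is_Un[of x S] by argo

lemma wb_translate:
  assumes "well_based S" shows "well_based ((\<lambda>x. mon_mult x t) ` S)"
proof (rule ccontr)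
  assume "\<not> ?thesis"
  then obtain h where h: "\<forall>n. h n \<in> (\<lambda>x. mon_mult x t) ` S \<and> mon_less (h n) (h (Suc n))"
    unfolding well_based_def by blast
  have "mon_mult (h n) (minv t) \<in> S" for n
  proof -
    obtain x where "x \<in> S" "h n = mon_mult x t" using h by blast
    then show ?thesis by (simp add: mon_mult_assoc)
  qed
  then have "\<forall>n. mon_mult (h n) (minv t) \<in> S \<and> mon_less (mon_mult (h n) (minv t)) (mon_mult (h (Suc n)) (minv t))"
    using h by auto
  then have "\<exists>g. \<forall>n. g n \<in> S \<and> mon_less (g n) (g (Suc n))" by (intro exI[of _ "\<lambda>n. mon_mult (h n) (minv t)"])
  then show False using assms unfolding well_based_def by blast
qed

lemma wellorder_no_desc:
  fixes a :: "nat \<Rightarrow> 'w::wellorder"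
  shows "\<not> (\<forall>i. a (Suc i) < a i)"
proof -
  have "wf {(x::'w, y). x < y}" by (rule wf)
  then show ?thesis unfolding wf_iff_no_infinite_down_chain by auto
qed

lemma wb_range_anti:
  assumes "\<And>a b. (a::'a::wellorder) < b \<Longrightarrow> mon_less (\<phi> b) (\<phi> a)"
  shows "well_based (range \<phi>)"
proof (rule ccontr)
  assume "\<not> ?thesis"
  then obtain h where h: "\<forall>n. h n \<in> range \<phi> \<and> mon_less (h n) (h (Suc n))"
    unfolding well_based_def by blast
  define a where "a n = (SOME b. h n = \<phi> b)" for n
  have a: "\<forall>n. h n = \<phi> (a n)"
  proof
    fix n
    have "h n \<in> range \<phi>" using spec[OF h, of n] by (rule conjunct1)
    then have "\<exists>b. h n = \<phi> b" by (rule rangeE) (rule exI)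
    then show "h n = \<phi> (a n)" unfolding a_def by (rule someI_ex)
  qed
  have "a (Suc n) < a n" for n
  proof (rule ccontr)
    assume "\<not> a (Suc n) < a n"
    then have D: "a n = a (Suc n) \<or> a n < a (Suc n)" by (meson not_less_iff_gr_or_eq)
    have L: "mon_less (\<phi> (a n)) (\<phi> (a (Suc n)))" using h a by metis
    from D show False
    proof
      assume "a n = a (Suc n)" then show False using L by simp
    next
      assume "a n < a (Suc n)"
      then have "mon_less (\<phi> (a (Suc n))) (\<phi> (a n))" by (rule assms)
      then show False using mon_less_asym[OF L] by simp
    qed
  qed
  then show False using wellorder_no_desc by blast
qed

lemma wb_dec_seq:
  assumes "\<And>n. mon_less (h (Suc n)) (h n)"
  shows "well_based (range h)"
proof (rule wb_range_anti)
  fix a b :: nat assume "a < b"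
  then show "mon_less (h b) (h a)"
  proof (induction b)
    case 0 then show ?case by simp
  next
    case (Suc b)
    show ?case
    proof (cases "a = b")
      case True then show ?thesis using assms by simp
    next
      case False then have "mon_less (h b) (h a)" using Suc by simp
      then show ?thesis using assms[of b] mon_less_trans[of "h (Suc b)" "h b" "h a"] by blast
    qed
  qed
qed

lemma wb_subseq:
  fixes s :: "nat \<Rightarrow> 'o::wellorder mon"
  assumes wb: "well_based S" and s: "\<forall>i. s i \<in> S"
  shows "\<exists>\<phi>. strict_mono \<phi> \<and> (\<forall>j. mon_le (s (\<phi> (Suc j))) (s (\<phi> j)))"
proof -
  define M where "M = {i. \<forall>j>i. mon_le (s j) (s i)}"
  have unb: "\<exists>i\<in>M. n \<le> i" for n
  proof -
    have sub: "s ` {n..} \<subseteq> S" using s by auto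
    have ne: "s ` {n..} \<noteq> {}" by auto
    obtain m where m: "m \<in> s ` {n..}" "\<forall>x\<in>s ` {n..}. x = m \<or> mon_less x m"
      using wb_max[OF wb sub ne] by blast
    then obtain i where i: "i \<ge> n" "s i = m" by auto
    have "\<forall>j>i. mon_le (s j) (s i)"
    proof (intro allI impI)
      fix j assume "i < j"
      then have "s j \<in> s ` {n..}" using i by auto
      then show "mon_le (s j) (s i)" using m(2) i(2) by blast
    qed
    then have "i \<in> M" unfolding M_def by simp
    then show ?thesis using i by blast
  qed
  then have "\<forall>m. \<exists>n\<ge>m. n \<in> M" by blast
  then have inf: "infinite M" using infinite_nat_iff_unbounded_le[of M] by blast
  define \<phi> where "\<phi> = enumerate M"
  have sm: "strict_mono \<phi>" unfolding \<phi>_def by (rule strict_monoI) (rule enumerate_mono[OF _ inf])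
  have "mon_le (s (\<phi> (Suc j))) (s (\<phi> j))" for j
  proof -
    have "\<phi> j \<in> M" unfolding \<phi>_def using enumerate_in_set[OF inf] .
    then have "\<forall>k>\<phi> j. mon_le (s k) (s (\<phi> j))" unfolding M_def by simp
    moreover have "\<phi> j < \<phi> (Suc j)" using sm by (simp add: strict_monoD)
    ultimately show ?thesis by blast
  qed
  then show ?thesis using sm by blast
qed


definition prodl :: "'o mon list \<Rightarrow> 'o mon" where
  "prodl xs = foldr mon_mult xs mon_one"

lemma prodl_Nil[simp]: "prodl [] = mon_one" by (simp add: prodl_def)
lemma prodl_Cons[simp]: "prodl (x#xs) = mon_mult x (prodl xs)" by (simp add: prodl_def)
lemma prodl_append: "prodl (xs @ ys) = mon_mult (prodl xs) (prodl ys)"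
  by (induction xs) (simp_all add: mon_mult_assoc)

definition gen0 :: "'o mon set \<Rightarrow> 'o mon set" where
  "gen0 S = {prodl xs | xs. set xs \<subseteq> S}"
definition gen :: "'o mon set \<Rightarrow> 'o mon set" where
  "gen S = {prodl xs | xs. xs \<noteq> [] \<and> set xs \<subseteq> S}"

lemma gen0_one[simp]: "mon_one \<in> gen0 S"
  unfolding gen0_def by (auto intro!: exI[of _ "[]"])

lemma gen0_mult: "x \<in> gen0 S \<Longrightarrow> y \<in> gen0 S \<Longrightarrow> mon_mult x y \<in> gen0 S"
proof -
  assume "x \<in> gen0 S" "y \<in> gen0 S"
  then obtain xs ys where "x = prodl xs" "set xs \<subseteq> S" "y = prodl ys" "set ys \<subseteq> S"
    unfolding gen0_def by blast
  then show ?thesis unfolding gen0_def by (auto simp: prodl_append[symmetric] intro!: exI[of _ "xs @ ys"])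
qed

lemma gen_mult: "x \<in> gen S \<Longrightarrow> y \<in> gen0 S \<Longrightarrow> mon_mult x y \<in> gen S"
proof -
  assume "x \<in> gen S" "y \<in> gen0 S"
  then obtain xs ys where "x = prodl xs" "set xs \<subseteq> S" "xs \<noteq> []" "y = prodl ys" "set ys \<subseteq> S"
    unfolding gen0_def gen_def by blast
  then show ?thesis unfolding gen_def by (auto simp: prodl_append[symmetric] intro!: exI[of _ "xs @ ys"])
qed

lemma gen_sub_gen0: "gen S \<subseteq> gen0 S"
  unfolding gen_def gen0_def by blast

lemma gen0_mono: "S \<subseteq> T \<Longrightarrow> gen0 S \<subseteq> gen0 T"
  unfolding gen0_def by blast

lemma gen_mono: "S \<subseteq> T \<Longrightarrow> gen S \<subseteq> gen T"
  unfolding gen_def by blast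

lemma S_sub_gen: "s \<in> S \<Longrightarrow> s \<in> gen S"
  unfolding gen_def by (auto intro!: exI[of _ "[s]"])

lemma S_sub_gen0: "s \<in> S \<Longrightarrow> s \<in> gen0 S"
  using S_sub_gen gen_sub_gen0 by blast

lemma gen_Cons: "s \<in> S \<Longrightarrow> y \<in> gen0 S \<Longrightarrow> mon_mult s y \<in> gen S"
  using gen_mult[OF S_sub_gen] by blast

lemma gen0_neg_list:
  fixes xs :: "'o::wellorder mon list"
  assumes "\<forall>s\<in>S. mon_less s mon_one" "set xs \<subseteq> S"
  shows "mon_le (prodl xs) mon_one \<and> (xs \<noteq> [] \<longrightarrow> mon_less (prodl xs) mon_one)"
  using assms(2)
proof (induction xs)
  case Nil then show ?case by simp
next
  case (Cons x xs)
  then have "mon_less x mon_one" "mon_le (prodl xs) mon_one" using assms(1) by auto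
  then have "mon_less (prodl (x#xs)) mon_one" using mon_neg_mult_le by simp
  then show ?case by simp
qed

lemma gen0_neg: "\<forall>s\<in>S. mon_less s mon_one \<Longrightarrow> x \<in> gen0 S \<Longrightarrow> mon_le x (mon_one::'o::wellorder mon)"
  unfolding gen0_def using gen0_neg_list by blast

lemma gen_neg: "\<forall>s\<in>S. mon_less s mon_one \<Longrightarrow> x \<in> gen S \<Longrightarrow> mon_less x (mon_one::'o::wellorder mon)"
  unfolding gen_def using gen0_neg_list by blast

lemma neumann:
  fixes S :: "'o::wellorder mon set"
  assumes wb: "well_based S" and neg: "\<forall>s\<in>S. mon_less s mon_one"
  shows "well_based (gen0 S)"
proof (rule ccontr)
  assume nwb: "\<not> well_based (gen0 S)"
  define G where "G = gen0 S"
  define B where "B = {x. \<exists>h. h 0 = x \<and> (\<forall>n. h n \<in> G \<and> mon_less (h n) (h (Suc n)))}"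
  have B_ne: "B \<noteq> {}"
  proof -
    obtain h where "\<forall>n. h n \<in> G \<and> mon_less (h n) (h (Suc n))"
      using nwb unfolding well_based_def G_def by blast
    then have "h 0 \<in> B" unfolding B_def by blast
    then show ?thesis by blast
  qed
  have B_step: "\<exists>y\<in>B. mon_less x y" if "x \<in> B" for x
  proof -
    have "\<exists>h. h 0 = x \<and> (\<forall>n. h n \<in> G \<and> mon_less (h n) (h (Suc n)))"
      using that unfolding B_def by simp
    then obtain h where h0: "h 0 = x \<and> (\<forall>n. h n \<in> G \<and> mon_less (h n) (h (Suc n)))" ..
    then have h: "h 0 = x" "\<forall>n. h n \<in> G \<and> mon_less (h n) (h (Suc n))" by auto
    have "h (Suc 0) \<in> B" unfolding B_def
      by (rule CollectI, rule exI[of _ "\<lambda>n. h (Suc n)"]) (use h in simp)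
    moreover have "mon_less (h 0) (h (Suc 0))" using h(2) by simp
    ultimately show ?thesis using h(1) by blast
  qed
  have B_G: "x \<in> G" if "x \<in> B" for x
  proof -
    have "\<exists>h. h 0 = x \<and> (\<forall>n. h n \<in> G \<and> mon_less (h n) (h (Suc n)))"
      using that unfolding B_def by simp
    then obtain h where h0: "h 0 = x \<and> (\<forall>n. h n \<in> G \<and> mon_less (h n) (h (Suc n)))" ..
    then show ?thesis using spec[OF conjunct2[OF h0], of 0] conjunct1[OF h0] by metis
  qed
  define N where "N x = (LEAST n. \<exists>xs. length xs = n \<and> set xs \<subseteq> S \<and> prodl xs = x)" for x
  have N_ex: "\<exists>xs. length xs = N x \<and> set xs \<subseteq> S \<and> prodl xs = x" if xG: "x \<in> G" for x
  proof -
    obtain xs where "set xs \<subseteq> S" "prodl xs = x" using xG unfolding G_def gen0_def by blast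
    then have "\<exists>n. \<exists>xs. length xs = n \<and> set xs \<subseteq> S \<and> prodl xs = x" by blast
    then show ?thesis unfolding N_def by (rule LeastI_ex)
  qed
  have N_le: "N (prodl xs) \<le> length xs" if "set xs \<subseteq> S" for xs
    unfolding N_def by (rule Least_le) (use that in blast)
  define sel where "sel A = (SOME x. x \<in> A \<and> (\<forall>z\<in>A. N x \<le> N z))" for A
  have sel: "sel A \<in> A \<and> (\<forall>z\<in>A. N (sel A) \<le> N z)" if "A \<noteq> {}" for A
  proof -
    obtain a where "a \<in> A" using \<open>A \<noteq> {}\<close> by blast
    then obtain x where "x \<in> A \<and> (\<forall>y. y \<in> A \<longrightarrow> N x \<le> N y)"
      using ex_has_least_nat[of "\<lambda>x. x \<in> A" a N] by blast
    then have "\<exists>x. x \<in> A \<and> (\<forall>z\<in>A. N x \<le> N z)" by blast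
    then show ?thesis unfolding sel_def by (rule someI_ex)
  qed
  define x where "x = rec_nat (sel B) (\<lambda>i xi. sel {y\<in>B. mon_less xi y})"
  have x0: "x 0 = sel B" unfolding x_def by simp
  have xS: "x (Suc i) = sel {y\<in>B. mon_less (x i) y}" for i unfolding x_def by simp
  have xB: "x i \<in> B" for i
  proof (induction i)
    case 0 then show ?case using sel[OF B_ne] x0 by simp
  next
    case (Suc i)
    obtain y where "y \<in> B" "mon_less (x i) y" using B_step[OF Suc.IH] by blast
    then have ne: "{y\<in>B. mon_less (x i) y} \<noteq> {}" by blast
    have "sel {y\<in>B. mon_less (x i) y} \<in> {y\<in>B. mon_less (x i) y}" using sel[OF ne] by (rule conjunct1)
    then show ?case unfolding xS[of i] by simp
  qed
  have xinc: "mon_less (x i) (x (Suc i))" for i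
  proof -
    obtain y where "y \<in> B" "mon_less (x i) y" using B_step[OF xB[of i]] by blast
    then have ne: "{y\<in>B. mon_less (x i) y} \<noteq> {}" by blast
    have "sel {y\<in>B. mon_less (x i) y} \<in> {y\<in>B. mon_less (x i) y}" using sel[OF ne] by (rule conjunct1)
    then show ?thesis unfolding xS[of i] by simp
  qed
  have xmin0: "N (x 0) \<le> N z" if "z \<in> B" for z using sel[OF B_ne] x0 that by simp
  have xminS: "N (x (Suc i)) \<le> N z" if "z \<in> B" "mon_less (x i) z" for z i
  proof -
    have ne: "{y\<in>B. mon_less (x i) y} \<noteq> {}" using that by blast
    show ?thesis using sel[OF ne] xS[of i] that by simp
  qed
  have xmono: "mon_less (x i) (x j)" if "i < j" for i j
    using that
  proof (induction j)
    case 0 then show ?case by simp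
  next
    case (Suc j)
    show ?case
    proof (cases "i = j")
      case True then show ?thesis using xinc by simp
    next
      case False then have "mon_less (x i) (x j)" using Suc by simp
      then show ?thesis using mon_less_trans[OF _ xinc[of j]] by simp
    qed
  qed
  have dec: "\<exists>s y. s \<in> S \<and> y \<in> G \<and> x i = mon_mult s y \<and> N y < N (x i)" for i
  proof -
    have "x (Suc i) \<in> G" using xB B_G by blast
    then have "mon_le (x (Suc i)) mon_one" using gen0_neg[OF neg] unfolding G_def by blast
    then have "mon_less (x i) mon_one"
    proof
      assume "x (Suc i) = mon_one" then show ?thesis using xinc[of i] by simp
    next
      assume "mon_less (x (Suc i)) mon_one" then show ?thesis using mon_less_trans[OF xinc[of i]] by simp
    qed
    then have ne1: "x i \<noteq> mon_one" by auto
    obtain xs where xs: "length xs = N (x i)" "set xs \<subseteq> S" "prodl xs = x i"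
      using N_ex[of "x i"] xB B_G by blast
    then obtain s ys where sys: "xs = s # ys" using ne1 by (cases xs) auto
    have "s \<in> S" "set ys \<subseteq> S" using xs sys by auto
    moreover have "prodl ys \<in> G" unfolding G_def gen0_def using \<open>set ys \<subseteq> S\<close> by blast
    moreover have "x i = mon_mult s (prodl ys)" using xs sys by simp
    moreover have "N (prodl ys) < N (x i)" using N_le[OF \<open>set ys \<subseteq> S\<close>] xs sys by simp
    ultimately show ?thesis by blast
  qed
  then have "\<forall>i. \<exists>s. \<exists>y. s \<in> S \<and> y \<in> G \<and> x i = mon_mult s y \<and> N y < N (x i)" by blast
  then obtain s where "\<forall>i. \<exists>y. s i \<in> S \<and> y \<in> G \<and> x i = mon_mult (s i) y \<and> N y < N (x i)"
    by (rule choice[THEN exE])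
  then obtain y where sy: "\<forall>i. s i \<in> S \<and> y i \<in> G \<and> x i = mon_mult (s i) (y i) \<and> N (y i) < N (x i)"
    by (rule choice[THEN exE])
  obtain \<phi> where \<phi>: "strict_mono \<phi>" "\<forall>j. mon_le (s (\<phi> (Suc j))) (s (\<phi> j))"
    using wb_subseq[OF wb] sy by blast
  have yinc: "mon_less (y (\<phi> j)) (y (\<phi> (Suc j)))" for j
  proof -
    have "\<phi> j < \<phi> (Suc j)" using \<phi>(1) by (simp add: strict_monoD)
    then have "mon_less (x (\<phi> j)) (x (\<phi> (Suc j)))" by (rule xmono)
    then have "mon_less (mon_mult (s (\<phi> j)) (y (\<phi> j))) (mon_mult (s (\<phi> (Suc j))) (y (\<phi> (Suc j))))"
      using sy by metis
    then show ?thesis using mon_mult_cancel_less[of "s (\<phi> j)" "y (\<phi> j)" "s (\<phi> (Suc j))" "y (\<phi> (Suc j))"] \<phi>(2) by blast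
  qed
  define z where "z = y (\<phi> 0)"
  have zB: "z \<in> B" unfolding B_def z_def
    by (rule CollectI, rule exI[of _ "\<lambda>j. y (\<phi> j)"]) (use sy yinc in simp)
  have zN: "N z < N (x (\<phi> 0))" unfolding z_def using sy by blast
  show False
  proof (cases "\<phi> 0")
    case 0
    then show False using xmin0[OF zB] zN by simp
  next
    case (Suc i)
    have "mon_less (x (\<phi> 0)) z"
    proof -
      have "x (\<phi> 0) = mon_mult (s (\<phi> 0)) z" unfolding z_def using sy by blast
      moreover have "mon_less (s (\<phi> 0)) mon_one" using sy neg by blast
      ultimately show ?thesis using mon_neg_mult by simp
    qed
    then have "mon_less (x i) z" using mon_less_trans[OF xinc[of i]] Suc by simp
    then show False using xminS[OF zB] zN Suc by (metis not_le)
  qed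
qed


lemma supp_iff: "m \<in> supp f \<longleftrightarrow> f m \<noteq> 0" by (simp add: supp_def)

lemma supp_mult:
  assumes "m \<in> supp (ser_mult f g)"
  shows "\<exists>a b. a \<in> supp f \<and> b \<in> supp g \<and> m = mon_mult a b"
proof (rule ccontr)
  assume "\<not> ?thesis"
  then have E: "{p. fst p \<in> supp f \<and> snd p \<in> supp g \<and> mon_mult (fst p) (snd p) = m} = {}" by auto
  have "ser_mult f g m = 0" by (simp only: ser_mult_def E sum.empty)
  then show False using assms by (simp add: supp_def)
qed

lemma supp_const1: "supp (ser_const 1) = {mon_one}"
  by (auto simp: supp_def ser_const_def)

lemma supp_pow: "supp (ser_pow e (Suc n)) \<subseteq> gen (supp e)"
proof (induction n)
  case 0
  show ?case
  proof
    fix m assume "m \<in> supp (ser_pow e (Suc 0))"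
    then have "m \<in> supp (ser_mult e (ser_const 1))" by simp
    then obtain a b where "a \<in> supp e" "b \<in> supp (ser_const 1)" "m = mon_mult a b"
      using supp_mult by blast
    moreover have "b = mon_one" using \<open>b \<in> supp (ser_const 1)\<close> supp_const1 by blast
    ultimately have "m = a" "a \<in> supp e" by auto
    then show "m \<in> gen (supp e)" using S_sub_gen by blast
  qed
next
  case (Suc n)
  show ?case
  proof
    fix m assume "m \<in> supp (ser_pow e (Suc (Suc n)))"
    then have "m \<in> supp (ser_mult e (ser_pow e (Suc n)))" by simp
    then obtain a b where ab: "a \<in> supp e" "b \<in> supp (ser_pow e (Suc n))" "m = mon_mult a b"
      using supp_mult by blast
    then have "b \<in> gen0 (supp e)" using Suc gen_sub_gen0 by blast
    then show "m \<in> gen (supp e)" using gen_Cons[OF ab(1)] ab(3) by simp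
  qed
qed

lemma supp_sum_fam:
  assumes "m \<in> supp (sum_fam F I)"
  shows "\<exists>i\<in>I. m \<in> supp (F i)"
proof (rule ccontr)
  assume "\<not> ?thesis"
  then have E: "{i\<in>I. m \<in> supp (F i)} = {}" by auto
  have "sum_fam F I m = 0" by (simp only: sum_fam_def E sum.empty)
  then show False using assms by (simp add: supp_def)
qed

lemma supp_scale: "supp (ser_scale c f) \<subseteq> supp f"
  by (auto simp: supp_def ser_scale_def)

definition epsset :: "'o::wellorder ser \<Rightarrow> 'o mon set" where
  "epsset f = {m. m \<noteq> mon_one \<and> mon_mult m (dom_mon f) \<in> supp f}"

lemma Llog_decomp:
  fixes f :: "'o::wellorder ser"
  assumes c: "f (dom_mon f) \<noteq> 0"
  shows "\<exists>S. (\<forall>m. Llog f m = log_mon (dom_mon f) m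
              + (if m = mon_one then ln (f (dom_mon f)) else 0) + S m)
           \<and> (\<forall>m. S m \<noteq> 0 \<longrightarrow> m \<in> gen (epsset f))"
proof -
  define d where "d = dom_mon f"
  define cc where "cc = f d"
  define eps where "eps = (\<lambda>m. f (mon_mult m d) / cc - (if m = mon_one then 1 else 0))"
  define S where "S = sum_fam (\<lambda>n. ser_scale ((-1) ^ (n - 1) / real n) (ser_pow eps n)) {1..}"
  have cc: "cc \<noteq> 0" using c unfolding cc_def d_def .
  have Lf: "Llog f = ser_add (ser_add (log_mon d) (ser_const (ln cc))) S"
    unfolding Llog_def Let_def S_def eps_def cc_def d_def ..
  have se: "supp eps = epsset f"
  proof
    show "supp eps \<subseteq> epsset f"
    proof
      fix m assume "m \<in> supp eps"
      then have "eps m \<noteq> 0" by (simp add: supp_def)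
      moreover have "eps mon_one = 0" unfolding eps_def cc_def using cc unfolding cc_def by simp
      ultimately have "m \<noteq> mon_one" by auto
      then have "f (mon_mult m d) \<noteq> 0" using \<open>eps m \<noteq> 0\<close> unfolding eps_def by auto
      then show "m \<in> epsset f" using \<open>m \<noteq> mon_one\<close> unfolding epsset_def d_def supp_def by simp
    qed
  next
    show "epsset f \<subseteq> supp eps"
    proof
      fix m assume "m \<in> epsset f"
      then have "m \<noteq> mon_one" "f (mon_mult m d) \<noteq> 0" unfolding epsset_def d_def supp_def by auto
      then show "m \<in> supp eps" unfolding supp_def eps_def using cc by simp
    qed
  qed
  have "S m \<noteq> 0 \<longrightarrow> m \<in> gen (epsset f)" for m
  proof
    assume "S m \<noteq> 0"
    then have "m \<in> supp S" by (simp add: supp_def)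
    then obtain n where n: "n \<in> {1::nat..}" "m \<in> supp (ser_scale ((-1) ^ (n - 1) / real n) (ser_pow eps n))"
      unfolding S_def using supp_sum_fam by blast
    then have "m \<in> supp (ser_pow eps n)" using supp_scale by blast
    moreover obtain k where "n = Suc k" using n(1) by (cases n) auto
    ultimately have "m \<in> supp (ser_pow eps (Suc k))" by simp
    then have "m \<in> gen (supp eps)" using supp_pow[of eps k] by blast
    then show "m \<in> gen (epsset f)" using se by simp
  qed
  moreover have "\<forall>m. Llog f m = log_mon (dom_mon f) m
              + (if m = mon_one then ln (f (dom_mon f)) else 0) + S m"
    unfolding Lf by (simp add: ser_add_def ser_const_def d_def cc_def)
  ultimately show ?thesis by blast
qed

lemma epsset_neg:
  fixes f :: "'o::wellorder ser"
  assumes "\<forall>m\<in>supp f. m = dom_mon f \<or> mon_less m (dom_mon f)"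
  shows "\<forall>e\<in>epsset f. mon_less e mon_one"
proof
  fix e assume e: "e \<in> epsset f"
  then have ne: "e \<noteq> mon_one" and s: "mon_mult e (dom_mon f) \<in> supp f" unfolding epsset_def by auto
  have "mon_mult e (dom_mon f) \<noteq> mon_mult mon_one (dom_mon f)" using ne mon_mult_cancel by metis
  then have "mon_mult e (dom_mon f) \<noteq> dom_mon f" by simp
  moreover have "mon_mult e (dom_mon f) = dom_mon f \<or> mon_less (mon_mult e (dom_mon f)) (dom_mon f)"
    using assms s by blast
  ultimately have "mon_less (mon_mult e (dom_mon f)) (mon_mult mon_one (dom_mon f))" by simp
  then show "mon_less e mon_one" by (simp only: mon_less_mult_right)
qed

lemma dom_mon_eq:
  fixes f :: "'o::wellorder ser"
  assumes "m \<in> supp f" "\<forall>m'\<in>supp f. m' = m \<or> mon_less m' m"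
  shows "dom_mon f = m"
  unfolding dom_mon_def
proof (rule the_equality)
  show "m \<in> supp f \<and> (\<forall>m'\<in>supp f. m' = m \<or> mon_less m' m)" using assms by blast
next
  fix m2 assume m2: "m2 \<in> supp f \<and> (\<forall>m'\<in>supp f. m' = m2 \<or> mon_less m' m2)"
  then have 1: "m = m2 \<or> mon_less m m2" using assms(1) by blast
  have 2: "m2 = m \<or> mon_less m2 m" using assms(2) m2 by blast
  show "m2 = m" using 1 2 mon_less_asym by blast
qed

lemma dom_mon_ex:
  fixes f :: "'o::wellorder ser"
  assumes "well_based (supp f)" "supp f \<noteq> {}"
  shows "dom_mon f \<in> supp f \<and> (\<forall>m'\<in>supp f. m' = dom_mon f \<or> mon_less m' (dom_mon f))"
proof -
  obtain m where m: "m \<in> supp f" "\<forall>x\<in>supp f. x = m \<or> mon_less x m"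
    using wb_max[OF assms(1) _ assms(2)] by blast
  then have "dom_mon f = m" by (rule dom_mon_eq)
  then show ?thesis using m by simp
qed

section \<open>Successor\<close>

lemma ordsucc_gt: "\<exists>\<gamma>. (\<beta>::'o::wellorder) < \<gamma> \<Longrightarrow> \<beta> < ordsucc \<beta>"
  unfolding ordsucc_def by (rule LeastI_ex)

lemma ordsucc_le: "(\<beta>::'o::wellorder) < \<alpha> \<Longrightarrow> ordsucc \<beta> \<le> \<alpha>"
  unfolding ordsucc_def by (rule Least_le)

lemma ordsucc_mono:
  fixes a b :: "'o::wellorder"
  assumes nomax: "\<forall>\<beta>::'o::wellorder. \<exists>\<gamma>. \<beta> < \<gamma>" and "a < b"
  shows "ordsucc a < ordsucc b"
proof -
  have "ordsucc a \<le> b" using ordsucc_le[OF assms(2)] .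
  also have "b < ordsucc b" using nomax by (intro ordsucc_gt) blast
  finally show ?thesis .
qed

lemma ordsucc_inj:
  fixes a b :: "'o::wellorder"
  assumes nomax: "\<forall>\<beta>::'o::wellorder. \<exists>\<gamma>. \<beta> < \<gamma>"
  shows "ordsucc a = ordsucc b \<longleftrightarrow> a = b"
proof
  assume e: "ordsucc a = ordsucc b"
  show "a = b"
  proof (rule ccontr)
    assume "a \<noteq> b"
    then have "a < b \<or> b < a" by (rule neqE) auto
    then show False
    proof
      assume "a < b" then show False using ordsucc_mono[OF nomax, of a b] e by simp
    next
      assume "b < a" then show False using ordsucc_mono[OF nomax, of b a] e by simp
    qed
  qed
qed simp

lemma log_mon_val:
  "log_mon d m = (\<Sum>\<beta>\<in>{\<beta>. d \<beta> \<noteq> 0 \<and> m = ell (ordsucc \<beta>)}. d \<beta>)"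
proof -
  have set: "{\<beta>\<in>UNIV. m \<in> supp (ser_scale (d \<beta>) (ser_monom (ell (ordsucc \<beta>))))}
       = {\<beta>. d \<beta> \<noteq> 0 \<and> m = ell (ordsucc \<beta>)}"
    by (auto simp: supp_def ser_scale_def ser_monom_def)
  show ?thesis unfolding log_mon_def sum_fam_def set
    by (rule sum.cong) (auto simp: ser_scale_def ser_monom_def)
qed

lemma log_mon_supp: "log_mon d m \<noteq> 0 \<Longrightarrow> \<exists>\<beta>. d \<beta> \<noteq> 0 \<and> m = ell (ordsucc \<beta>)"
proof (rule ccontr)
  assume "log_mon d m \<noteq> 0" "\<not> (\<exists>\<beta>. d \<beta> \<noteq> 0 \<and> m = ell (ordsucc \<beta>))"
  then have E: "{\<beta>. d \<beta> \<noteq> 0 \<and> m = ell (ordsucc \<beta>)} = {}" by auto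
  have "log_mon d m = 0" unfolding log_mon_val E by simp
  then show False using \<open>log_mon d m \<noteq> 0\<close> by simp
qed

lemma log_mon_at:
  fixes d :: "'o::wellorder mon"
  assumes nomax: "\<forall>\<beta>::'o::wellorder. \<exists>\<gamma>. \<beta> < \<gamma>"
  shows "log_mon d (ell (ordsucc (\<beta>0::'o))) = d \<beta>0"
proof (cases "d \<beta>0 = 0")
  case True
  have E: "{\<beta>. d \<beta> \<noteq> 0 \<and> ell (ordsucc \<beta>0) = ell (ordsucc \<beta>)} = {}"
    using True by (auto simp: ell_inj ordsucc_inj[OF nomax])
  show ?thesis unfolding log_mon_val E using True by simp
next
  case False
  have E: "{\<beta>. d \<beta> \<noteq> 0 \<and> ell (ordsucc \<beta>0) = ell (ordsucc \<beta>)} = {\<beta>0}"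
    using False by (auto simp: ell_inj ordsucc_inj[OF nomax])
  show ?thesis unfolding log_mon_val E by simp
qed

lemma log_mon_ell:
  fixes m :: "'o::wellorder mon"
  assumes nomax: "\<forall>\<beta>::'o::wellorder. \<exists>\<gamma>. \<beta> < \<gamma>"
  shows "log_mon (ell (\<gamma>::'o)) m = (if m = ell (ordsucc \<gamma>) then 1 else 0)"
proof (cases "m = ell (ordsucc \<gamma>)")
  case True then show ?thesis using log_mon_at[OF nomax] by (simp add: ell_def)
next
  case False
  show ?thesis
  proof (rule ccontr)
    assume "\<not> ?thesis"
    then have "log_mon (ell \<gamma>) m \<noteq> 0" using False by simp
    then obtain \<beta> where "ell \<gamma> \<beta> \<noteq> 0" "m = ell (ordsucc \<beta>)" using log_mon_supp by blast
    then show False using False by (simp add: ell_def split: if_splits)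
  qed
qed


lemma mons_below_mult: "a \<in> mons_below \<alpha> \<Longrightarrow> b \<in> mons_below \<alpha> \<Longrightarrow> mon_mult a b \<in> mons_below \<alpha>"
  by (simp add: mons_below_def mon_mult_def)
lemma mons_below_minv: "a \<in> mons_below \<alpha> \<Longrightarrow> minv a \<in> mons_below \<alpha>"
  by (simp add: mons_below_def minv_def)
lemma mons_below_one: "mon_one \<in> mons_below \<alpha>"
  by (simp add: mons_below_def mon_one_def)
lemma mons_below_ell: "\<gamma> < \<alpha> \<Longrightarrow> ell \<gamma> \<in> mons_below \<alpha>"
  by (auto simp: mons_below_def ell_def)
lemma mons_below_mono: "\<alpha>0 \<le> \<alpha> \<Longrightarrow> mons_below \<alpha>0 \<subseteq> mons_below \<alpha>"
  by (auto simp: mons_below_def)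

lemma gen0_mons_below:
  assumes "S \<subseteq> mons_below \<alpha>" shows "gen0 S \<subseteq> mons_below \<alpha>"
proof
  fix x assume "x \<in> gen0 S"
  then obtain xs where xs: "set xs \<subseteq> S" "x = prodl xs" unfolding gen0_def by blast
  have "set xs \<subseteq> S \<Longrightarrow> prodl xs \<in> mons_below \<alpha>"
  proof (induction xs)
    case Nil then show ?case by (simp add: mons_below_one)
  next
    case (Cons a xs) then show ?case using assms mons_below_mult by auto
  qed
  then show "x \<in> mons_below \<alpha>" using xs by simp
qed

lemma gen_coset:
  assumes p: "p \<in> gen0 T" and X: "X \<subseteq> (\<lambda>h. mon_mult p h) ` gen0 T"
  shows "gen X \<subseteq> (\<lambda>h. mon_mult p h) ` gen0 T"
proof
  fix x assume "x \<in> gen X"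
  then obtain xs where xs: "xs \<noteq> []" "set xs \<subseteq> X" "x = prodl xs" unfolding gen_def by blast
  have "xs \<noteq> [] \<Longrightarrow> set xs \<subseteq> X \<Longrightarrow> prodl xs \<in> (\<lambda>h. mon_mult p h) ` gen0 T"
  proof (induction xs)
    case Nil then show ?case by simp
  next
    case (Cons a xs)
    obtain h1 where h1: "h1 \<in> gen0 T" "a = mon_mult p h1" using Cons.prems X by auto
    show ?case
    proof (cases "xs = []")
      case True then show ?thesis using h1 by auto
    next
      case False
      then obtain h2 where h2: "h2 \<in> gen0 T" "prodl xs = mon_mult p h2" using Cons by auto
      have "prodl (a # xs) = mon_mult p (mon_mult h1 (mon_mult p h2))"
        using h1 h2 by (simp add: mon_mult_assoc)
      moreover have "mon_mult h1 (mon_mult p h2) \<in> gen0 T" using h1 h2 p gen0_mult by blast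
      ultimately show ?thesis by blast
    qed
  qed
  then show "x \<in> (\<lambda>h. mon_mult p h) ` gen0 T" using xs by simp
qed

lemma minv_swap:
  fixes a b :: "'o::wellorder mon"
  assumes "mon_less a b" shows "mon_less (minv b) (minv a)"
proof -
  have "mon_less (mon_mult a (mon_mult (minv a) (minv b))) (mon_mult b (mon_mult (minv a) (minv b)))"
    using assms by simp
  moreover have "mon_mult a (mon_mult (minv a) (minv b)) = minv b"
    by (simp add: mon_mult_assoc[symmetric])
  moreover have "mon_mult b (mon_mult (minv a) (minv b)) = minv a"
    by (metis mon_mult_assoc mon_mult_comm mon_mult_minv(1) mon_mult_one(1))
  ultimately show ?thesis by simp
qed

lemma logn_0[simp]: "logn 0 g = g" by (simp add: logn_def)
lemma logn_Suc[simp]: "logn (Suc n) g = Llog (logn n g)" by (simp add: logn_def)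

lemma Llog_step:
  fixes f :: "'o::wellorder ser" and \<gamma> :: 'o
  assumes nomax: "\<forall>\<beta>::'o. \<exists>\<gamma>. \<beta> < \<gamma>"
    and c: "f (ell \<gamma>) > 0"
    and below: "\<forall>m\<in>supp f. m = ell \<gamma> \<or> mon_less m (ell \<gamma>)"
  shows "dom_mon f = ell \<gamma>"
    and "epsset f = {m. m \<noteq> mon_one \<and> mon_mult m (ell \<gamma>) \<in> supp f}"
    and "\<forall>e\<in>epsset f. mon_less e mon_one"
    and "\<And>m. Llog f m \<noteq> 0 \<Longrightarrow> m = ell (ordsucc \<gamma>) \<or> m = mon_one \<or> m \<in> gen (epsset f)"
    and "f (ell \<gamma>) = 1 \<Longrightarrow> Llog f mon_one = 0"
    and "Llog f (ell (ordsucc \<gamma>)) = 1"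
proof -
  have ins: "ell \<gamma> \<in> supp f" using c by (simp add: supp_def)
  show D: "dom_mon f = ell \<gamma>" by (rule dom_mon_eq[OF ins below])
  show E: "epsset f = {m. m \<noteq> mon_one \<and> mon_mult m (ell \<gamma>) \<in> supp f}"
    unfolding epsset_def D ..
  have below': "\<forall>m\<in>supp f. m = dom_mon f \<or> mon_less m (dom_mon f)" using below D by simp
  show neg: "\<forall>e\<in>epsset f. mon_less e mon_one" by (rule epsset_neg[OF below'])
  have c': "f (dom_mon f) \<noteq> 0" using c D by simp
  obtain S where S: "\<And>m. Llog f m = log_mon (ell \<gamma>) m + (if m = mon_one then ln (f (ell \<gamma>)) else 0) + S m"
    "\<And>m. S m \<noteq> 0 \<Longrightarrow> m \<in> gen (epsset f)"
    using Llog_decomp[of f, OF c'] unfolding D by blast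
  have Sgen: "S m = 0" if "\<not> mon_less m mon_one" for m
  proof (rule ccontr)
    assume "S m \<noteq> 0"
    then have "m \<in> gen (epsset f)" using S(2) by blast
    then have "mon_less m mon_one" using gen_neg[OF neg] by blast
    then show False using that by simp
  qed
  show "m = ell (ordsucc \<gamma>) \<or> m = mon_one \<or> m \<in> gen (epsset f)" if "Llog f m \<noteq> 0" for m
  proof (rule ccontr)
    assume a: "\<not> ?thesis"
    then have "S m = 0" using S(2) by blast
    moreover have "log_mon (ell \<gamma>) m = 0" using a log_mon_ell[OF nomax] by simp
    ultimately have "Llog f m = 0" using S(1)[of m] a by simp
    then show False using that by simp
  qed
  show "Llog f mon_one = 0" if "f (ell \<gamma>) = 1"
  proof -
    have "S mon_one = 0" using Sgen by simp
    moreover have "log_mon (ell \<gamma>) mon_one = 0" using log_mon_ell[OF nomax] ell_ne_one[of "ordsucc \<gamma>"] by simp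
    ultimately show ?thesis using S(1)[of mon_one] that by simp
  qed
  show "Llog f (ell (ordsucc \<gamma>)) = 1"
  proof -
    have "\<not> mon_less (ell (ordsucc \<gamma>)) mon_one" using ell_pos mon_less_asym by blast
    then have "S (ell (ordsucc \<gamma>)) = 0" using Sgen by blast
    moreover have "log_mon (ell \<gamma>) (ell (ordsucc \<gamma>)) = 1" using log_mon_ell[OF nomax] by simp
    ultimately show ?thesis using S(1)[of "ell (ordsucc \<gamma>)"] ell_ne_one[of "ordsucc \<gamma>"] by simp
  qed
qed


lemma mon_mult_swap: "mon_mult (mon_mult a b) c = mon_mult (mon_mult a c) b"
  by (simp add: mon_mult_def algebra_simps)

theorem lemma4p7:
  fixes g :: "'o::wellorder ser"
  assumes ords: "\<forall>S::'o set. countable S \<longrightarrow> (\<exists>b. \<forall>s\<in>S. s < b)"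
    and "g \<in> Lser"
    and "pos_infinite g"
  shows "multipliable (\<lambda>n. logn n g) (UNIV :: nat set)"
proof -
  have nomax: "\<forall>\<beta>::'o. \<exists>\<gamma>. \<beta> < \<gamma>"
  proof
    fix \<beta> :: 'o
    have "countable {\<beta>}" by simp
    then obtain b where "\<forall>s\<in>{\<beta>}. s < b" using ords by blast
    then show "\<exists>\<gamma>. \<beta> < \<gamma>" by blast
  qed
  obtain \<alpha>0 where g0: "g \<in> Lbelow \<alpha>0" using assms(2) unfolding Lser_def by blast
  have gsupp: "supp g \<subseteq> mons_below \<alpha>0" "well_based (supp g)" using g0 unfolding Lbelow_def by auto
  have gpos: "ser_pos g"
  proof -
    have "ser_less (ser_const 0) g" using assms(3) unfolding pos_infinite_def by blast
    moreover have "(\<lambda>m. g m - ser_const 0 m) = g" by (auto simp: ser_const_def)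
    ultimately show ?thesis unfolding ser_less_def by simp
  qed
  define dg where "dg = dom_mon g"
  have gne: "supp g \<noteq> {}" and gc: "g dg > 0" using gpos unfolding ser_pos_def dg_def by auto
  have dgp: "dg \<in> supp g" "\<forall>m\<in>supp g. m = dg \<or> mon_less m dg"
    using dom_mon_ex[OF gsupp(2) gne] unfolding dg_def by auto
  have dg1: "mon_less mon_one dg"
  proof (rule ccontr)
    assume "\<not> ?thesis"
    then have le: "mon_le dg mon_one" using mon_not_less by blast
    define c where "c = g mon_one + 1"
    define h where "h = (\<lambda>m. g m - ser_const c m)"
    have hpos: "ser_pos h" using assms(3) unfolding pos_infinite_def ser_less_def h_def by blast
    have h1: "h mon_one = -1" unfolding h_def c_def ser_const_def by simp
    have "mon_one \<in> supp h" using h1 by (simp add: supp_def)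
    moreover have "\<forall>m\<in>supp h. m = mon_one \<or> mon_less m mon_one"
    proof
      fix m assume m: "m \<in> supp h"
      show "m = mon_one \<or> mon_less m mon_one"
      proof (cases "m = mon_one")
        case True then show ?thesis by simp
      next
        case False
        then have "g m \<noteq> 0" using m unfolding h_def supp_def ser_const_def by simp
        then have "m \<in> supp g" by (simp add: supp_def)
        then have "mon_le m dg" using dgp by blast
        then show ?thesis using mon_le_trans[OF _ le] by blast
      qed
    qed
    ultimately have "dom_mon h = mon_one" by (rule dom_mon_eq)
    then show False using hpos h1 unfolding ser_pos_def by simp
  qed
  obtain \<beta>0 where \<beta>0: "0 < dg \<beta>0" "\<forall>\<gamma><\<beta>0. dg \<gamma> = 0"
    using dg1 unfolding mon_less_iff mon_one_def by auto
  define gam where "gam n = (ordsucc ^^ n) \<beta>0" for n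
  have gam_Suc: "gam (Suc n) = ordsucc (gam n)" for n unfolding gam_def by simp
  have gam0: "gam 0 = \<beta>0" unfolding gam_def by simp
  have gam_lt: "gam n < gam (Suc n)" for n
    unfolding gam_Suc using nomax by (intro ordsucc_gt) blast
  have gam_mono: "strict_mono gam" using gam_lt by (simp add: strict_mono_Suc_iff)
  have ell_dec: "mon_less (ell (gam (Suc n))) (ell (gam n))" for n using ell_less gam_lt by blast
  obtain \<alpha> where \<alpha>: "\<alpha>0 < \<alpha>" "\<forall>n. gam n < \<alpha>"
  proof -
    have "countable (insert \<alpha>0 (range gam))" by simp
    then obtain b where "\<forall>s\<in>insert \<alpha>0 (range gam). s < b" using ords by blast
    then show ?thesis by (intro that) auto
  qed
  define Mb where "Mb = mons_below \<alpha>"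
  have gMb: "supp g \<subseteq> Mb"
  proof -
    have "mons_below \<alpha>0 \<subseteq> mons_below \<alpha>" using \<alpha>(1) by (intro mons_below_mono) simp
    then show ?thesis using gsupp(1) unfolding Mb_def by blast
  qed
  have ellMb: "ell (gam n) \<in> Mb" for n unfolding Mb_def using \<alpha>(2) mons_below_ell by blast
  have dgMb: "dg \<in> Mb" using dgp(1) gMb by blast
  define f1 where "f1 = Llog g"
  have gc': "g (dom_mon g) \<noteq> 0" using gc unfolding dg_def by simp
  obtain S0 where S0: "\<And>m. f1 m = log_mon dg m + (if m = mon_one then ln (g dg) else 0) + S0 m"
    "\<And>m. S0 m \<noteq> 0 \<Longrightarrow> m \<in> gen (epsset g)"
    using Llog_decomp[of g, OF gc'] unfolding f1_def dg_def by blast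
  define E0 where "E0 = epsset g"
  have E0neg: "\<forall>e\<in>E0. mon_less e mon_one" unfolding E0_def
    by (rule epsset_neg) (use dgp in \<open>simp add: dg_def\<close>)
  have E0sub: "E0 \<subseteq> (\<lambda>x. mon_mult x (minv dg)) ` supp g"
  proof
    fix e assume "e \<in> E0"
    then have "mon_mult e dg \<in> supp g" unfolding E0_def epsset_def dg_def by simp
    moreover have "e = mon_mult (mon_mult e dg) (minv dg)" by (simp add: mon_mult_assoc)
    ultimately show "e \<in> (\<lambda>x. mon_mult x (minv dg)) ` supp g" by blast
  qed
  have E0wb: "well_based E0" using wb_subset[OF wb_translate[OF gsupp(2)] E0sub] .
  have E0Mb: "E0 \<subseteq> Mb"
  proof
    fix e assume "e \<in> E0"
    then obtain x where "x \<in> supp g" "e = mon_mult x (minv dg)" using E0sub by blast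
    then show "e \<in> Mb" using gMb dgMb mons_below_mult mons_below_minv unfolding Mb_def by blast
  qed
  have genE0: "gen E0 \<subseteq> Mb" using gen0_mons_below[of E0 \<alpha>] E0Mb gen_sub_gen0 unfolding Mb_def by blast
  have genE0neg: "mon_less x mon_one" if "x \<in> gen E0" for x using gen_neg[OF E0neg] that by blast
  define L0 where "L0 = {ell (ordsucc \<beta>) | \<beta>. dg \<beta> \<noteq> 0}"
  have f1supp: "supp f1 \<subseteq> L0 \<union> (insert mon_one (gen E0))"
  proof
    fix m assume "m \<in> supp f1"
    then have "f1 m \<noteq> 0" by (simp add: supp_def)
    then have "log_mon dg m \<noteq> 0 \<or> m = mon_one \<or> S0 m \<noteq> 0" using S0(1)[of m] by auto
    then show "m \<in> L0 \<union> (insert mon_one (gen E0))"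
    proof (elim disjE)
      assume "log_mon dg m \<noteq> 0"
      then show ?thesis using log_mon_supp unfolding L0_def by blast
    next
      assume "S0 m \<noteq> 0" then show ?thesis using S0(2) unfolding E0_def by blast
    qed simp
  qed
  have L0wb: "well_based L0"
  proof (rule wb_subset)
    show "well_based (range (\<lambda>\<beta>::'o. ell (ordsucc \<beta>)))"
    proof (rule wb_range_anti)
      fix a b :: 'o assume "a < b"
      then have "ordsucc a < ordsucc b" by (rule ordsucc_mono[OF nomax])
      then show "mon_less (ell (ordsucc b)) (ell (ordsucc a))" by (rule ell_less)
    qed
    show "L0 \<subseteq> range (\<lambda>\<beta>::'o. ell (ordsucc \<beta>))" unfolding L0_def by blast
  qed
  have f1wb: "well_based (supp f1)"
  proof (rule wb_subset[OF _ f1supp])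
    have "well_based (gen0 E0)" by (rule neumann[OF E0wb E0neg])
    then have "well_based (gen E0)" using wb_subset gen_sub_gen0 by blast
    then show "well_based (L0 \<union> insert mon_one (gen E0))" using wb_Un[OF L0wb] wb_insert by blast
  qed
  have L0Mb: "L0 \<subseteq> Mb"
  proof
    fix m assume "m \<in> L0"
    then obtain \<beta> where b: "dg \<beta> \<noteq> 0" "m = ell (ordsucc \<beta>)" unfolding L0_def by blast
    have "dg \<in> mons_below \<alpha>0" using dgp(1) gsupp(1) by blast
    then have "\<beta> < \<alpha>0" using b(1) unfolding mons_below_def using not_less by blast
    then have "ordsucc \<beta> \<le> \<alpha>0" by (rule ordsucc_le)
    then have "ordsucc \<beta> < \<alpha>" using \<alpha>(1) by simp
    then show "m \<in> Mb" unfolding Mb_def using b(2) mons_below_ell by blast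
  qed
  have f1Mb: "supp f1 \<subseteq> Mb" using f1supp L0Mb genE0 mons_below_one unfolding Mb_def by blast
  have gam1: "gam 1 = ordsucc \<beta>0" using gam_Suc[of 0] gam0 by simp
  have notgen: "x \<notin> gen E0" if "mon_less mon_one x" for x
    using genE0neg[of x] that mon_less_asym by blast
  have f1val: "f1 (ell (gam 1)) = dg \<beta>0"
  proof -
    have "S0 (ell (gam 1)) = 0" using S0(2)[of "ell (gam 1)"] notgen[OF ell_pos, of "gam 1"] unfolding E0_def by blast
    then show ?thesis using S0(1)[of "ell (gam 1)"] log_mon_at[OF nomax, of dg \<beta>0] gam1 by (simp add: ell_ne_one)
  qed
  have f1below: "\<forall>m\<in>supp f1. m = ell (gam 1) \<or> mon_less m (ell (gam 1))"
  proof
    fix m assume "m \<in> supp f1"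
    then have "m \<in> L0 \<or> m = mon_one \<or> m \<in> gen E0" using f1supp by blast
    then show "m = ell (gam 1) \<or> mon_less m (ell (gam 1))"
    proof (elim disjE)
      assume "m \<in> L0"
      then obtain \<beta> where b: "dg \<beta> \<noteq> 0" "m = ell (ordsucc \<beta>)" unfolding L0_def by blast
      then have "\<not> \<beta> < \<beta>0" using \<beta>0(2) by blast
      then have "\<beta> = \<beta>0 \<or> \<beta>0 < \<beta>" by (meson not_less_iff_gr_or_eq)
      then show ?thesis
      proof
        assume "\<beta> = \<beta>0" then show ?thesis using b gam1 by simp
      next
        assume "\<beta>0 < \<beta>"
        then have "ordsucc \<beta>0 < ordsucc \<beta>" by (rule ordsucc_mono[OF nomax])
        then have "mon_less (ell (ordsucc \<beta>)) (ell (ordsucc \<beta>0))" by (rule ell_less)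
        then show ?thesis using b gam1 by simp
      qed
    next
      assume "m = mon_one" then show ?thesis by (simp add: ell_pos)
    next
      assume "m \<in> gen E0"
      then have "mon_less m mon_one" by (rule genE0neg)
      then show ?thesis using mon_less_trans[OF _ ell_pos] by blast
    qed
  qed
  have f1pos: "f1 (ell (gam 1)) > 0" using f1val \<beta>0(1) by simp
  note st1 = Llog_step[OF nomax f1pos f1below]
  define E1 where "E1 = epsset f1"
  have E1neg: "\<forall>e\<in>E1. mon_less e mon_one" unfolding E1_def using st1(3) .
  have E1sub: "E1 \<subseteq> (\<lambda>x. mon_mult x (minv (ell (gam 1)))) ` supp f1"
  proof
    fix e assume "e \<in> E1"
    then have "mon_mult e (ell (gam 1)) \<in> supp f1" unfolding E1_def st1(2) by simp
    moreover have "e = mon_mult (mon_mult e (ell (gam 1))) (minv (ell (gam 1)))" by (simp add: mon_mult_assoc)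
    ultimately show "e \<in> (\<lambda>x. mon_mult x (minv (ell (gam 1)))) ` supp f1" by blast
  qed
  have E1wb: "well_based E1" using wb_subset[OF wb_translate[OF f1wb] E1sub] .
  have E1Mb: "E1 \<subseteq> Mb"
  proof
    fix e assume "e \<in> E1"
    then obtain x where "x \<in> supp f1" "e = mon_mult x (minv (ell (gam 1)))" using E1sub by blast
    then show "e \<in> Mb" using f1Mb ellMb mons_below_mult mons_below_minv unfolding Mb_def by blast
  qed
  define pp where "pp = rec_nat mon_one (\<lambda>n p. mon_mult p (minv (ell (gam (Suc (Suc n))))))"
  have pp0: "pp 0 = mon_one" unfolding pp_def by simp
  have ppS: "pp (Suc n) = mon_mult (pp n) (minv (ell (gam (Suc (Suc n)))))" for n unfolding pp_def by simp
  have minvneg: "mon_less (minv (ell \<gamma>)) mon_one" for \<gamma> :: 'o by (rule minv_less[OF ell_pos])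
  have pp_dec: "mon_less (pp (Suc n)) (pp n)" for n
    unfolding ppS using mon_less_mult_left[of "pp n" "minv (ell (gam (Suc (Suc n))))" mon_one] minvneg by simp
  have pp_le: "mon_le (pp n) mon_one" for n
  proof (induction n)
    case 0 then show ?case using pp0 by simp
  next
    case (Suc n)
    then show ?case using pp_dec[of n] mon_le_trans[of "pp (Suc n)" "pp n" mon_one] by blast
  qed
  have pp_neg: "mon_less (pp (Suc n)) mon_one" for n
  proof -
    have "mon_le (pp n) mon_one" by (rule pp_le)
    then show ?thesis
    proof
      assume "pp n = mon_one" then show ?thesis using pp_dec[of n] by simp
    next
      assume "mon_less (pp n) mon_one" then show ?thesis using mon_less_trans[OF pp_dec[of n]] by blast
    qed
  qed
  define P where "P = range (\<lambda>n. pp (Suc n))"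
  have Pwb: "well_based P" unfolding P_def by (rule wb_dec_seq) (rule pp_dec)
  have Pneg: "\<forall>p\<in>P. mon_less p mon_one" unfolding P_def using pp_neg by blast
  define H where "H = gen0 (P \<union> E1)"
  have PEneg: "\<forall>s\<in>P \<union> E1. mon_less s mon_one" using Pneg E1neg by blast
  have Hwb: "well_based H" unfolding H_def by (rule neumann[OF wb_Un[OF Pwb E1wb] PEneg])
  have ppH: "pp n \<in> H" for n
  proof (cases n)
    case 0 then show ?thesis unfolding H_def using pp0 by simp
  next
    case (Suc k)
    then have "pp n \<in> P \<union> E1" unfolding P_def by blast
    then show ?thesis unfolding H_def by (rule S_sub_gen0)
  qed
  have Hle: "mon_le x mon_one" if "x \<in> H" for x using gen0_neg[OF PEneg] that unfolding H_def by blast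
  have ppMb: "pp n \<in> Mb" for n
  proof (induction n)
    case 0 then show ?case using pp0 mons_below_one unfolding Mb_def by simp
  next
    case (Suc n) then show ?case unfolding ppS using ellMb mons_below_mult mons_below_minv unfolding Mb_def by blast
  qed
  have HMb: "H \<subseteq> Mb"
  proof -
    have "P \<subseteq> Mb" unfolding P_def using ppMb by blast
    then have "P \<union> E1 \<subseteq> mons_below \<alpha>" using E1Mb unfolding Mb_def by blast
    then show ?thesis unfolding H_def Mb_def by (rule gen0_mons_below)
  qed
  have cosetH: "mon_mult (pp k) h \<in> H" if "h \<in> H" for k h
    using gen0_mult ppH that unfolding H_def by blast
  define F where "F n = logn n g" for n
  have F0: "F 0 = g" unfolding F_def by simp
  have FS: "F (Suc n) = Llog (F n)" for n unfolding F_def by simp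
  have F1: "F 1 = f1" unfolding F_def f1_def by simp
  have J: "supp (F (k+2)) \<subseteq> insert (ell (gam (k+2))) ((\<lambda>h. mon_mult (pp k) h) ` H)
           \<and> F (k+2) (ell (gam (k+2))) = 1" for k
  proof (induction k)
    case 0
    have F2: "F (0+2) = Llog f1" using FS[of 1] F1 by simp
    have g2: "gam (0+2) = ordsucc (gam 1)" using gam_Suc[of 1] by simp
    have "supp (Llog f1) \<subseteq> insert (ell (gam (0+2))) ((\<lambda>h. mon_mult (pp 0) h) ` H)"
    proof
      fix m assume "m \<in> supp (Llog f1)"
      then have "Llog f1 m \<noteq> 0" by (simp add: supp_def)
      then have "m = ell (ordsucc (gam 1)) \<or> m = mon_one \<or> m \<in> gen E1" using st1(4) unfolding E1_def by blast
      moreover have "mon_one \<in> H" unfolding H_def by simp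
      moreover have "gen E1 \<subseteq> H" unfolding H_def using gen_sub_gen0 gen0_mono[of E1 "P \<union> E1"] by blast
      ultimately have "m = ell (gam (0+2)) \<or> m \<in> H" using g2 by auto
      then show "m \<in> insert (ell (gam (0+2))) ((\<lambda>h. mon_mult (pp 0) h) ` H)" using pp0 by auto
    qed
    moreover have "Llog f1 (ell (gam (0+2))) = 1" using st1(6) g2 by simp
    ultimately show ?case using F2 by simp
  next
    case (Suc k)
    define f where "f = F (k+2)"
    define l where "l = ell (gam (k+2))"
    have fS: "F (Suc k + 2) = Llog f" unfolding f_def using FS[of "k+2"] by simp
    have gS: "gam (Suc k + 2) = ordsucc (gam (k+2))" using gam_Suc[of "k+2"] by simp
    have IH1: "supp f \<subseteq> insert l ((\<lambda>h. mon_mult (pp k) h) ` H)" and IH2: "f l = 1"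
      using Suc.IH unfolding f_def l_def by auto
    have cosle: "mon_le (mon_mult (pp k) h) mon_one" if "h \<in> H" for h
      using mon_le_mult[OF pp_le[of k] Hle[OF that]] by simp
    have below: "\<forall>m\<in>supp f. m = l \<or> mon_less m l"
    proof
      fix m assume "m \<in> supp f"
      then have "m = l \<or> m \<in> (\<lambda>h. mon_mult (pp k) h) ` H" using IH1 by blast
      then show "m = l \<or> mon_less m l"
      proof
        assume "m \<in> (\<lambda>h. mon_mult (pp k) h) ` H"
        then obtain h where "h \<in> H" "m = mon_mult (pp k) h" by blast
        then have "mon_le m mon_one" using cosle by blast
        then have "mon_less m l"
        proof
          assume "m = mon_one" then show ?thesis unfolding l_def by (simp add: ell_pos)
        next
          assume "mon_less m mon_one" then show ?thesis unfolding l_def using mon_less_trans[OF _ ell_pos] by blast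
        qed
        then show ?thesis by simp
      qed simp
    qed
    have fpos: "f (ell (gam (k+2))) > 0" using IH2 unfolding l_def by simp
    note st = Llog_step[OF nomax fpos below[unfolded l_def]]
    have epsH: "epsset f \<subseteq> (\<lambda>h. mon_mult (pp (Suc k)) h) ` H"
    proof
      fix e assume "e \<in> epsset f"
      then have e: "e \<noteq> mon_one" "mon_mult e l \<in> supp f" unfolding st(2) l_def by auto
      have "mon_mult e l \<noteq> l"
      proof
        assume "mon_mult e l = l"
        then have "mon_mult e l = mon_mult mon_one l" by simp
        then show False using e(1) mon_mult_cancel by blast
      qed
      then obtain h where h: "h \<in> H" "mon_mult e l = mon_mult (pp k) h" using e(2) IH1 by blast
      have "e = mon_mult (mon_mult e l) (minv l)" by (simp add: mon_mult_assoc)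
      also have "\<dots> = mon_mult (mon_mult (pp k) h) (minv l)" using h by simp
      also have "\<dots> = mon_mult (pp (Suc k)) h" unfolding ppS l_def
        by (simp add: mon_mult_swap add_2_eq_Suc')
      finally show "e \<in> (\<lambda>h. mon_mult (pp (Suc k)) h) ` H" using h(1) by blast
    qed
    have genH: "gen (epsset f) \<subseteq> (\<lambda>h. mon_mult (pp (Suc k)) h) ` H"
      using gen_coset[of "pp (Suc k)" "P \<union> E1" "epsset f"] ppH epsH unfolding H_def by blast
    have one0: "Llog f mon_one = 0" using st(5) IH2 unfolding l_def by blast
    have "supp (Llog f) \<subseteq> insert (ell (gam (Suc k + 2))) ((\<lambda>h. mon_mult (pp (Suc k)) h) ` H)"
    proof
      fix m assume "m \<in> supp (Llog f)"
      then have m0: "Llog f m \<noteq> 0" by (simp add: supp_def)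
      then have "m = ell (ordsucc (gam (k+2))) \<or> m = mon_one \<or> m \<in> gen (epsset f)" using st(4) by blast
      moreover have "m \<noteq> mon_one" using m0 one0 by auto
      ultimately show "m \<in> insert (ell (gam (Suc k + 2))) ((\<lambda>h. mon_mult (pp (Suc k)) h) ` H)"
        using gS genH by auto
    qed
    moreover have "Llog f (ell (gam (Suc k + 2))) = 1" using st(6) gS by simp
    ultimately show ?case using fS by simp
  qed
  have belowJ: "\<forall>m\<in>supp (F (k+2)). m = ell (gam (k+2)) \<or> mon_less m (ell (gam (k+2)))" for k
  proof
    fix m assume "m \<in> supp (F (k+2))"
    then have "m = ell (gam (k+2)) \<or> m \<in> (\<lambda>h. mon_mult (pp k) h) ` H" using J[of k] by blast
    then show "m = ell (gam (k+2)) \<or> mon_less m (ell (gam (k+2)))"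
    proof
      assume "m \<in> (\<lambda>h. mon_mult (pp k) h) ` H"
      then obtain h where h: "h \<in> H" "m = mon_mult (pp k) h" by blast
      then have "mon_le m mon_one" using mon_le_mult[OF pp_le[of k] Hle[OF h(1)]] by simp
      then have "mon_less m (ell (gam (k+2)))"
      proof
        assume "m = mon_one" then show ?thesis by (simp add: ell_pos)
      next
        assume "mon_less m mon_one" then show ?thesis using mon_less_trans[OF _ ell_pos] by blast
      qed
      then show ?thesis by simp
    qed simp
  qed
  have FsuppH: "supp (F (Suc (Suc k))) \<subseteq> insert (ell (gam (k+2))) H" for k
  proof -
    have "(\<lambda>h. mon_mult (pp k) h) ` H \<subseteq> H" using cosetH by blast
    moreover have "supp (F (Suc (Suc k))) \<subseteq> insert (ell (gam (k+2))) ((\<lambda>h. mon_mult (pp k) h) ` H)"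
      using J[of k] by (simp add: add_2_eq_Suc')
    ultimately show ?thesis by blast
  qed
  have Fsupp: "supp (F (Suc i)) \<subseteq> Mb \<and> well_based (supp (F (Suc i)))" for i
  proof (cases i)
    case 0 then show ?thesis using F1 f1Mb f1wb by simp
  next
    case (Suc k)
    have "insert (ell (gam (k+2))) H \<subseteq> Mb" using ellMb HMb by blast
    moreover have "well_based (insert (ell (gam (k+2))) H)" using wb_insert[OF Hwb] .
    ultimately show ?thesis using FsuppH[of k] Suc wb_subset by blast
  qed
  have Fpos: "ser_pos (F (Suc i))" for i
  proof (cases i)
    case 0
    have "ell (gam 1) \<in> supp f1" using f1pos by (simp add: supp_def)
    then show ?thesis unfolding ser_pos_def using F1 0 st1(1) f1pos by auto
  next
    case (Suc k)
    have v: "F (k+2) (ell (gam (k+2))) = 1" using J[of k] by blast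
    then have i: "ell (gam (k+2)) \<in> supp (F (k+2))" by (simp add: supp_def)
    have "dom_mon (F (k+2)) = ell (gam (k+2))" by (rule dom_mon_eq[OF i belowJ])
    then show ?thesis unfolding ser_pos_def using i v Suc by (auto simp: add_2_eq_Suc')
  qed
  have Lb: "F (Suc i) \<in> Lbelow \<alpha>" for i using Fsupp[of i] unfolding Lbelow_def Mb_def by simp
  have pp_anti: "mon_less (pp j) (pp i)" if "i < j" for i j
    using that
  proof (induction j)
    case 0 then show ?case by simp
  next
    case (Suc j)
    show ?case
    proof (cases "i = j")
      case True then show ?thesis using pp_dec by simp
    next
      case False then have "mon_less (pp j) (pp i)" using Suc by simp
      then show ?thesis using mon_less_trans[OF pp_dec[of j]] by simp
    qed
  qed
  have wbU: "well_based (\<Union>i. supp (F (Suc i)))"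
  proof (rule wb_subset)
    have "well_based (range (\<lambda>k. ell (gam (k+2))))"
      by (rule wb_dec_seq) (use ell_dec in simp)
    then show "well_based (supp f1 \<union> (range (\<lambda>k. ell (gam (k+2))) \<union> H))"
      using wb_Un[OF f1wb wb_Un[OF _ Hwb]] by blast
    show "(\<Union>i. supp (F (Suc i))) \<subseteq> supp f1 \<union> (range (\<lambda>k. ell (gam (k+2))) \<union> H)"
    proof
      fix m assume "m \<in> (\<Union>i. supp (F (Suc i)))"
      then obtain i where i: "m \<in> supp (F (Suc i))" by blast
      show "m \<in> supp f1 \<union> (range (\<lambda>k. ell (gam (k+2))) \<union> H)"
      proof (cases i)
        case 0 then show ?thesis using i F1 by simp
      next
        case (Suc k) then show ?thesis using i FsuppH[of k] by blast
      qed
    qed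
  qed
  have finU: "finite {i. m \<in> supp (F (Suc i))}" for m
  proof -
    define A1 where "A1 = {k. m = ell (gam (k+2))}"
    define A2 where "A2 = {k. m \<in> (\<lambda>h. mon_mult (pp k) h) ` H}"
    have inj: "inj (\<lambda>k. ell (gam (k+2)))"
    proof (rule injI)
      fix a b assume "ell (gam (a+2)) = ell (gam (b+2))"
      then have "gam (a+2) = gam (b+2)" by (simp add: ell_inj)
      then show "a = b" using strict_mono_eq[OF gam_mono] by simp
    qed
    have "A1 = (\<lambda>k. ell (gam (k+2))) -` {m}" unfolding A1_def by auto
    then have finA1: "finite A1" using finite_vimageI[OF _ inj] by simp
    have finA2: "finite A2"
    proof (rule ccontr)
      assume inf: "\<not> finite A2"
      define e where "e = enumerate A2"
      define hh where "hh j = mon_mult m (minv (pp (e j)))" for j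
      have "hh j \<in> H" for j
      proof -
        have "e j \<in> A2" unfolding e_def using enumerate_in_set[OF inf] .
        then obtain h where "h \<in> H" "m = mon_mult (pp (e j)) h" unfolding A2_def by blast
        moreover have "mon_mult (mon_mult (pp (e j)) h) (minv (pp (e j))) = h"
          by (simp only: mon_mult_swap[of "pp (e j)" h] mon_mult_minv mon_mult_one)
        ultimately show ?thesis unfolding hh_def by simp
      qed
      moreover have "mon_less (hh j) (hh (Suc j))" for j
      proof -
        have "e j < e (Suc j)" unfolding e_def using enumerate_mono[OF _ inf] by simp
        then have "mon_less (pp (e (Suc j))) (pp (e j))" by (rule pp_anti)
        then have "mon_less (minv (pp (e j))) (minv (pp (e (Suc j))))" by (rule minv_swap)
        then show ?thesis unfolding hh_def by simp
      qed
      ultimately have "\<exists>h. \<forall>n. h n \<in> H \<and> mon_less (h n) (h (Suc n))"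
        by (intro exI[of _ hh]) simp
      then show False using Hwb unfolding well_based_def by blast
    qed
    have "{i. m \<in> supp (F (Suc i))} \<subseteq> insert 0 (Suc ` (A1 \<union> A2))"
    proof
      fix i assume i: "i \<in> {i. m \<in> supp (F (Suc i))}"
      show "i \<in> insert 0 (Suc ` (A1 \<union> A2))"
      proof (cases i)
        case 0 then show ?thesis by simp
      next
        case (Suc k)
        then have "m \<in> supp (F (k+2))" using i by (simp add: add_2_eq_Suc')
        then have "k \<in> A1 \<union> A2" using J[of k] unfolding A1_def A2_def by blast
        then show ?thesis using Suc by blast
      qed
    qed
    moreover have "finite (insert 0 (Suc ` (A1 \<union> A2)))" using finA1 finA2 by simp
    ultimately show ?thesis by (rule finite_subset)
  qed
  have LF: "Llog (logn i g) = F (Suc i)" for i unfolding F_def by simp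
  have lF: "logn i g = F i" for i unfolding F_def by simp
  show ?thesis unfolding multipliable_def summable_fam_def lF FS[symmetric]
  proof (intro conjI)
    show "\<forall>i\<in>UNIV. F i \<in> Lser \<and> ser_pos (F i)"
    proof
      fix i :: nat
      show "F i \<in> Lser \<and> ser_pos (F i)"
      proof (cases i)
        case 0 then show ?thesis using F0 assms(2) gpos by simp
      next
        case (Suc j) then show ?thesis using Lb[of j] Fpos[of j] unfolding Lser_def by blast
      qed
    qed
    show "\<exists>\<alpha>::'o. \<forall>i\<in>UNIV. F (Suc i) \<in> Lbelow \<alpha>" using Lb by blast
    show "well_based (\<Union>i\<in>UNIV. supp (F (Suc i)))" using wbU .
    show "\<forall>m. finite {i \<in> UNIV. m \<in> supp (F (Suc i))}" using finU by simp
  qed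
qed

end
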